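(* For every nonnegative integer $k$, the following identity of formal power series in an indeterminate $z$ holds (the paper writes $z=[t]_q$): $$\sum_{n\ge 0}W_{m,r}[n,k]_q\,\frac{z^{n}}{[n]_q!}=\frac{1}{[k]_{q^m}!\,[m]_q^{k}}\sum_{j=0}^{k}(-1)^{k-j}\,q^{m\binom{k-j}{2}}\begin{bmatrix}k\\ j\end{bmatrix}_{q^m}e_q\big([jm+r]_q\,z\big),$$ where $e_q(x)=\sum_{n\ge0}\frac{x^n}{[n]_q!}$ is the $q$-exponential function.
   Context: Fix a real number $q>0$ with $q\neq 1$, a positive integer $m$ and a complex number $r$. For complex $x$ put $q^x=e^{x\ln q}$ and $[x]_q=\frac{1-q^x}{1-q}$. For $p>0$, $p\ne 1$ and integers $0\le j\le k$: $[i]_p=\frac{1-p^i}{1-p}$, $[k]_p!=\prod_{i=1}^{k}[i]_p$ (with $[0]_p!=1$), and $\begin{bmatrix}k\\ j\end{bmatrix}_p=\frac{[k]_p!}{[j]_p!\,[k-j]_p!}$. The numbers $W_{m,r}[n,k]_q$ (a $q$-analogue of the $r$-Whitney numbers of the second kind), for integers $n,k$, are defined by $W_{m,r}[0,0]_q=1$, $W_{m,r}[n,k]_q=0$ whenever $n<k$ or $n<0$ or $k<0$, and, for $n\ge 1$ and $0\le k\le n$, $$W_{m,r}[n,k]_q=q^{m(k-1)+r}\,W_{m,r}[n-1,k-1]_q+[mk+r]_q\,W_{m,r}[n-1,k]_q .$$ *)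

theory Defs
  imports Complex_Main "HOL-Computational_Algebra.Formal_Power_Series"
begin

definition qpow :: "real \<Rightarrow> complex \<Rightarrow> complex" where
  "qpow q x = exp (x * complex_of_real (ln q))"

definition qbr :: "real \<Rightarrow> complex \<Rightarrow> complex" where
  "qbr q x = (1 - qpow q x) / complex_of_real (1 - q)"

definition qint :: "real \<Rightarrow> nat \<Rightarrow> real" where
  "qint p i = (1 - p ^ i) / (1 - p)"

definition qfact :: "real \<Rightarrow> nat \<Rightarrow> real" where
  "qfact p k = (\<Prod>i=1..k. qint p i)"

definition qbinom :: "real \<Rightarrow> nat \<Rightarrow> nat \<Rightarrow> real" where
  "qbinom p k j = qfact p k / (qfact p j * qfact p (k - j))"

text \<open>q-analogue of the r-Whitney numbers of the second kind, W_{m,r}[n,k]_q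
  (for natural n, k; values at negative indices are 0).\<close>
fun Wq :: "real \<Rightarrow> nat \<Rightarrow> complex \<Rightarrow> nat \<Rightarrow> nat \<Rightarrow> complex" where
  "Wq q m r 0 k = (if k = 0 then 1 else 0)"
| "Wq q m r (Suc n) k =
     (if Suc n < k then 0
      else (if k = 0 then 0
            else qpow q (of_nat (m * (k - 1)) + r) * Wq q m r n (k - 1))
           + qbr q (of_nat (m * k) + r) * Wq q m r n k)"

definition qexp :: "real \<Rightarrow> complex fps" where
  "qexp q = Abs_fps (\<lambda>n. 1 / complex_of_real (qfact q n))"

end

theory Submission
  imports Defs
begin

lemma qpow_ne1: assumes "(p::real) > 0" "p \<noteq> 1" "i > 0" shows "p ^ i \<noteq> 1"
proof
  assume "p ^ i = 1"
  then have "p ^ i = 1 ^ i" by simp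
  then have "p = 1" using power_eq_imp_eq_base[of p i 1] assms by simp
  then show False using assms by simp
qed

lemma qint_nz: assumes "(p::real) > 0" "p \<noteq> 1" "i > 0" shows "qint p i \<noteq> 0"
  using qpow_ne1[OF assms] assms by (simp add: qint_def)

lemma qint_0[simp]: "qint p 0 = 0" by (simp add: qint_def)

lemma qfact_Suc: "qfact p (Suc k) = qfact p k * qint p (Suc k)"
  by (simp add: qfact_def)

lemma qfact_nz: assumes "(p::real) > 0" "p \<noteq> 1" shows "qfact p k \<noteq> 0"
proof (induction k)
  case 0 then show ?case by (simp add: qfact_def)
next
  case (Suc k) then show ?case using qint_nz[OF assms, of "Suc k"] by (simp add: qfact_Suc)
qed

definition uu :: "real \<Rightarrow> nat \<Rightarrow> nat \<Rightarrow> real" where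
  "uu p k j = (-1)^(k-j) * p ^ ((k-j) choose 2) / (qfact p j * qfact p (k-j))"

lemma uu1: assumes "(p::real) > 0" "p \<noteq> 1" "j \<le> k"
  shows "qint p (Suc j) * uu p (Suc k) (Suc j) = uu p k j"
  using assms qfact_nz[OF assms(1,2)] qint_nz[OF assms(1,2), of "Suc j"]
  by (simp add: uu_def qfact_Suc field_simps)

lemma choose2_Suc: "Suc d choose 2 = (d choose 2) + d"
  by (simp add: numeral_2_eq_2)

lemma uu2: assumes "(p::real) > 0" "p \<noteq> 1"
  shows "qint p (Suc d) * uu p (j + Suc d) j = - (p ^ d * uu p (j + d) j)"
  using assms qfact_nz[OF assms(1,2)] qint_nz[OF assms(1,2), of "Suc d"]
  by (simp add: uu_def qfact_Suc field_simps choose2_Suc power_add)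

lemma qint_split: assumes "(p::real) \<noteq> 1" "j \<le> n"
  shows "qint p n = qint p j + p ^ j * qint p (n - j)"
proof -
  have "p ^ n = p ^ j * p ^ (n - j)" using assms by (simp flip: power_add)
  then show ?thesis using assms by (simp add: qint_def field_simps)
qed

definition SS :: "real \<Rightarrow> nat \<Rightarrow> real" where "SS p k = (\<Sum>j=0..k. uu p k j)"

lemma SS_rec: assumes "(p::real) > 0" "p \<noteq> 1"
  shows "qint p (Suc k) * SS p (Suc k) = (1 - p ^ k) * SS p k"
proof -
  have "qint p (Suc k) * SS p (Suc k) = (\<Sum>j=0..Suc k. qint p j * uu p (Suc k) j)
      + (\<Sum>j=0..Suc k. p ^ j * qint p (Suc k - j) * uu p (Suc k) j)"
    unfolding SS_def sum_distrib_left sum.distrib[symmetric]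
    by (rule sum.cong) (use qint_split[OF assms(2)] in \<open>auto simp: algebra_simps\<close>)
  also have "(\<Sum>j=0..Suc k. qint p j * uu p (Suc k) j) = SS p k"
    unfolding sum.atLeast0_atMost_Suc_shift SS_def
    by (simp add: uu1[OF assms])
  also have "(\<Sum>j=0..Suc k. p ^ j * qint p (Suc k - j) * uu p (Suc k) j) = - (p ^ k * SS p k)"
  proof -
    have "(\<Sum>j=0..Suc k. p ^ j * qint p (Suc k - j) * uu p (Suc k) j)
        = (\<Sum>j=0..k. p ^ j * qint p (Suc k - j) * uu p (Suc k) j)"
      by (simp add: sum.atLeast0_atMost_Suc)
    also have "\<dots> = (\<Sum>j=0..k. - (p ^ k * uu p k j))"
    proof (rule sum.cong)
      fix j assume "j \<in> {0..k}"
      then have jk: "j \<le> k" by simp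
      have e1: "Suc k - j = Suc (k - j)" "Suc k = j + Suc (k - j)" "k = j + (k - j)" using jk by auto
      have "p ^ j * qint p (Suc k - j) * uu p (Suc k) j = p ^ j * (qint p (Suc (k - j)) * uu p (j + Suc (k - j)) j)"
        by (simp only: e1(1)) (simp only: e1(2)[symmetric] mult.assoc)
      also have "\<dots> = - (p ^ j * p ^ (k - j) * uu p k j)"
        by (subst uu2[OF assms]) (use jk in simp)
      also have "\<dots> = - (p ^ k * uu p k j)" using jk by (simp flip: power_add)
      finally show "p ^ j * qint p (Suc k - j) * uu p (Suc k) j = - (p ^ k * uu p k j)" .
    qed simp
    finally show ?thesis by (simp add: SS_def sum_distrib_left sum_negf)
  qed
  also have "SS p k + - (p ^ k * SS p k) = (1 - p ^ k) * SS p k"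
    by (simp add: algebra_simps)
  finally show ?thesis .
qed

lemma SS_val: assumes "(p::real) > 0" "p \<noteq> 1"
  shows "SS p k = (if k = 0 then 1 else 0)"
proof (induction k)
  case 0 then show ?case by (simp add: SS_def uu_def qfact_def numeral_2_eq_2)
next
  case (Suc k)
  have "qint p (Suc k) * SS p (Suc k) = 0" proof (cases k)
    case 0 then show ?thesis using SS_rec[OF assms, of k] by simp
  next
    case (Suc k1) then show ?thesis using SS_rec[OF assms, of k] \<open>SS p k = _\<close> by simp
  qed
  then show ?case using qint_nz[OF assms, of "Suc k"] by simp
qed

lemma qpow_add: assumes "q > 0" shows "qpow q (of_nat a + r) = of_real (q ^ a) * qpow q r"
proof -
  have "exp (of_nat a * complex_of_real (ln q)) = exp (complex_of_real (ln q)) ^ a"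
    by (rule exp_of_nat_mult)
  also have "exp (complex_of_real (ln q)) = of_real q" using assms by (subst exp_of_real) simp
  finally show ?thesis unfolding qpow_def by (simp add: distrib_right exp_add)
qed

definition xx :: "real \<Rightarrow> nat \<Rightarrow> complex \<Rightarrow> nat \<Rightarrow> complex" where
  "xx q m r j = qbr q (of_nat (j * m) + r)"

lemma real_diff: assumes "q > 0" "q \<noteq> 1" "m > 0" "j \<le> k"
  shows "q^(j*m) * qint q m * qint (q^m) (k-j) = (q^(j*m) - q^(k*m))/(1-q)"
proof -
  have Q: "q^m \<noteq> 1" using qpow_ne1 assms by blast
  have km: "k*m = j*m + m*(k-j)" using assms(4) by (metis add_mult_distrib le_add_diff_inverse mult.commute)
  have e: "q^(k*m) = q^(j*m) * (q^m)^(k-j)" by (simp only: km power_add power_mult)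
  have d1: "1 - q \<noteq> 0" "1 - q^m \<noteq> 0" using Q assms(2) by auto
  have "qint q m * qint (q^m) (k-j) = (1 - (q^m)^(k-j))/(1-q)"
    unfolding qint_def using d1 by simp
  then have "q^(j*m) * qint q m * qint (q^m) (k-j) = q^(j*m) * ((1 - (q^m)^(k-j))/(1-q))"
    by (simp add: mult.assoc)
  also have "\<dots> = (q^(j*m) - q^(k*m))/(1-q)" unfolding e by (simp add: right_diff_distrib)
  finally show ?thesis .
qed

lemma xx_diff: assumes "q > 0" "q \<noteq> 1" "m > 0" "j \<le> k"
  shows "xx q m r j - xx q m r k = - (qpow q r * of_real (q^(j*m) * qint q m * qint (q^m) (k-j)))"
proof -
  have c: "of_real (1 - q) \<noteq> (0::complex)" using assms by simp
  have g: "\<And>a b P c::complex. c \<noteq> 0 \<Longrightarrow> (1 - a*P)/c - (1 - b*P)/c = - (P * (a - b) / c)"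
    by (simp add: diff_divide_distrib[symmetric] divide_minus_left[symmetric] algebra_simps)
  show ?thesis unfolding real_diff[OF assms] xx_def qbr_def qpow_add[OF assms(1)]
    using g[OF c] by simp
qed

lemma term_rel: assumes "q > 0" "q \<noteq> 1" "m > 0"
  shows "of_real (uu (q^m) (j + Suc d) j) * (xx q m r j - xx q m r (j + Suc d))
       = qpow q r * of_real ((q^m)^(j+d) * qint q m * uu (q^m) (j+d) j)"
proof -
  have Q: "q^m > 0" "q^m \<noteq> 1" using assms qpow_ne1[of q m] by auto
  have "of_real (uu (q^m) (j + Suc d) j) * (xx q m r j - xx q m r (j + Suc d))
     = - (qpow q r * of_real (q^(j*m) * qint q m * (qint (q^m) (Suc d) * uu (q^m) (j + Suc d) j)))"
    by (subst xx_diff[OF assms]) (simp_all add: algebra_simps)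
  also have "\<dots> = qpow q r * of_real (q^(j*m) * qint q m * ((q^m)^d * uu (q^m) (j+d) j))"
    by (subst uu2[OF Q]) simp
  also have "q^(j*m) = (q^m)^j" by (metis power_mult mult.commute)
  finally show ?thesis by (simp add: power_add algebra_simps)
qed

definition AA :: "real \<Rightarrow> nat \<Rightarrow> complex \<Rightarrow> nat \<Rightarrow> nat \<Rightarrow> complex" where
  "AA q m r n k = (\<Sum>j=0..k. of_real (uu (q^m) k j) * xx q m r j ^ n) / of_real (qint q m) ^ k"

lemma AA_0: assumes "q > 0" "q \<noteq> 1" "m > 0"
  shows "AA q m r 0 k = (if k = 0 then 1 else 0)"
proof -
  have Q: "q^m > 0" "q^m \<noteq> 1" using assms qpow_ne1[of q m] by auto
  have "AA q m r 0 k = of_real (SS (q^m) k) / of_real (qint q m) ^ k"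
    by (simp add: AA_def SS_def)
  then show ?thesis using SS_val[OF Q, of k] by simp
qed

lemma AA_rec0: "AA q m r (Suc n) 0 = xx q m r 0 * AA q m r n 0"
  by (simp add: AA_def)

lemma AA_rec: assumes "q > 0" "q \<noteq> 1" "m > 0"
  shows "AA q m r (Suc n) (Suc k) = qpow q (of_nat (m * k) + r) * AA q m r n k
        + xx q m r (Suc k) * AA q m r n (Suc k)"
proof -
  have Q: "q^m > 0" "q^m \<noteq> 1" using assms qpow_ne1[of q m] by auto
  have M: "of_real (qint q m) \<noteq> (0::complex)" using qint_nz[OF assms] by simp
  define U where "U = (\<lambda>j. (of_real (uu (q^m) (Suc k) j) :: complex))"
  define X where "X = xx q m r"
  define P where "P = qpow q r * of_real ((q^m)^k * qint q m)"
  have "(\<Sum>j=0..Suc k. U j * X j ^ Suc n) - X (Suc k) * (\<Sum>j=0..Suc k. U j * X j ^ n)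
      = (\<Sum>j=0..Suc k. U j * (X j - X (Suc k)) * X j ^ n)"
    unfolding sum_distrib_left sum_subtractf[symmetric]
    by (rule sum.cong) (simp_all add: algebra_simps)
  also have "\<dots> = (\<Sum>j=0..k. U j * (X j - X (Suc k)) * X j ^ n)"
    by (simp add: sum.atLeast0_atMost_Suc)
  also have "\<dots> = (\<Sum>j=0..k. P * (of_real (uu (q^m) k j) * X j ^ n))"
  proof (rule sum.cong)
    fix j assume "j \<in> {0..k}"
    then have jk: "Suc k = j + Suc (k - j)" "k = j + (k - j)" by auto
    have "U j * (X j - X (Suc k)) = qpow q r * of_real ((q^m)^(j+(k-j)) * qint q m * uu (q^m) (j+(k-j)) j)"
      unfolding U_def X_def by (subst (1 2) jk(1)) (rule term_rel[OF assms])
    then have "U j * (X j - X (Suc k)) = P * of_real (uu (q^m) k j)"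
      unfolding P_def by (simp only: jk(2)[symmetric]) (simp add: algebra_simps)
    then show "U j * (X j - X (Suc k)) * X j ^ n = P * (of_real (uu (q^m) k j) * X j ^ n)"
      by simp
  qed simp
  also have "\<dots> = P * (\<Sum>j=0..k. of_real (uu (q^m) k j) * X j ^ n)"
    by (simp only: sum_distrib_left)
  finally have key: "(\<Sum>j=0..Suc k. U j * X j ^ Suc n)
      = X (Suc k) * (\<Sum>j=0..Suc k. U j * X j ^ n) + P * (\<Sum>j=0..k. of_real (uu (q^m) k j) * X j ^ n)"
    by (simp only: diff_eq_eq add.commute)
  have qm: "q^(m*k) = (q^m)^k" by (simp add: power_mult)
  have qp: "qpow q (of_nat (m * k) + r) = qpow q r * of_real ((q^m)^k)"
    by (subst qpow_add[OF assms(1)]) (simp only: qm, rule mult.commute)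
  have g: "\<And>(x::complex) s0 pp c s' D. D \<noteq> 0 \<Longrightarrow>
     (x*s0 + (pp * (c*D)) * s') / D^(Suc k) = (pp*c)*(s'/D^k) + x*(s0/D^(Suc k))"
    by (simp add: field_simps)
  have P': "P = qpow q r * (of_real ((q^m)^k) * of_real (qint q m))" unfolding P_def by simp
  show ?thesis
    unfolding AA_def qp
    unfolding X_def[symmetric]
    by (subst key[unfolded U_def P']) (rule g[OF M])
qed

lemma Wq_zero: "n < k \<Longrightarrow> Wq q m r n k = 0"
  by (cases n) auto

lemma Wq_AA: assumes "q > 0" "q \<noteq> 1" "m > 0"
  shows "Wq q m r n k = AA q m r n k"
proof (induction n arbitrary: k)
  case 0 then show ?case by (simp add: AA_0[OF assms])
next
  case (Suc n)
  show ?case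
  proof (cases k)
    case 0 then show ?thesis using Suc.IH[of 0] by (simp add: AA_rec0 xx_def)
  next
    case (Suc k')
    have xk: "xx q m r (Suc k') = qbr q (of_nat (m * Suc k') + r)" by (simp add: xx_def mult.commute)
    show ?thesis
    proof (cases "Suc n < k")
      case True
      then show ?thesis using Suc AA_rec[OF assms, where n=n and k=k' and r=r] Suc.IH[of k'] Suc.IH[of "Suc k'"]
        Wq_zero[of n k' q m r] Wq_zero[of n "Suc k'" q m r] by simp
    next
      case False
      then show ?thesis using Suc AA_rec[OF assms, where n=n and k=k' and r=r] Suc.IH[of k'] Suc.IH[of "Suc k'"] xk
        by simp
    qed
  qed
qed

theorem theorem4:
  fixes q :: real and m k :: nat and r :: complex
  assumes "q > 0" and "q \<noteq> 1" and "m > 0"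
  shows "Abs_fps (\<lambda>n. Wq q m r n k / complex_of_real (qfact q n))
    = fps_const (1 / (complex_of_real (qfact (q ^ m) k) * complex_of_real (qint q m) ^ k))
      * (\<Sum>j=0..k. fps_const ((-1) ^ (k - j) * complex_of_real (q ^ (m * ((k - j) choose 2)))
                                * complex_of_real (qbinom (q ^ m) k j))
            * fps_compose (qexp q) (fps_const (qbr q (of_nat (j * m) + r)) * fps_X))"
proof (rule fps_ext)
  fix n
  have Q: "q^m > 0" "q^m \<noteq> 1" using assms qpow_ne1[of q m] by auto
  have F: "qfact (q^m) k \<noteq> 0" using qfact_nz[OF Q] .
  have Tr: "(-1) ^ (k - j) * q ^ (m * ((k - j) choose 2)) * qbinom (q ^ m) k j
         = qfact (q^m) k * uu (q^m) k j" for j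
    by (simp add: uu_def qbinom_def power_mult)
  have T: "(-1) ^ (k - j) * complex_of_real (q ^ (m * ((k - j) choose 2)))
                                * complex_of_real (qbinom (q ^ m) k j)
         = of_real (qfact (q^m) k) * of_real (uu (q^m) k j)" for j
    using arg_cong[OF Tr[of j], of complex_of_real] by simp
  have "fps_nth (fps_const (1 / (complex_of_real (qfact (q ^ m) k) * complex_of_real (qint q m) ^ k))
      * (\<Sum>j=0..k. fps_const ((-1) ^ (k - j) * complex_of_real (q ^ (m * ((k - j) choose 2)))
                                * complex_of_real (qbinom (q ^ m) k j))
            * fps_compose (qexp q) (fps_const (qbr q (of_nat (j * m) + r)) * fps_X))) n
     = 1 / (complex_of_real (qfact (q ^ m) k) * complex_of_real (qint q m) ^ k)
       * (\<Sum>j=0..k. ((-1) ^ (k - j) * complex_of_real (q ^ (m * ((k - j) choose 2)))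
                                * complex_of_real (qbinom (q ^ m) k j)) * (xx q m r j ^ n * (1 / of_real (qfact q n))))"
    by (simp only: fps_mult_left_const_nth fps_sum_nth fps_compose_linear qexp_def fps_nth_Abs_fps xx_def)
  also have "(\<Sum>j=0..k. ((-1) ^ (k - j) * complex_of_real (q ^ (m * ((k - j) choose 2)))
                                * complex_of_real (qbinom (q ^ m) k j)) * (xx q m r j ^ n * (1 / of_real (qfact q n))))
     = of_real (qfact (q^m) k) * ((\<Sum>j=0..k. of_real (uu (q^m) k j) * xx q m r j ^ n) / of_real (qfact q n))"
    unfolding sum_divide_distrib sum_distrib_left T by (rule sum.cong) simp_all
  also have "1 / (complex_of_real (qfact (q ^ m) k) * complex_of_real (qint q m) ^ k) *
      (of_real (qfact (q^m) k) * ((\<Sum>j=0..k. of_real (uu (q^m) k j) * xx q m r j ^ n) / of_real (qfact q n)))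
      = AA q m r n k / of_real (qfact q n)"
  proof -
    have g: "\<And>(Fc::complex) Dc S f. Fc \<noteq> 0 \<Longrightarrow> 1 / (Fc * Dc) * (Fc * (S / f)) = S / Dc / f"
      by (simp add: field_simps)
    show ?thesis unfolding AA_def by (rule g) (use F in simp)
  qed
  finally show "fps_nth (Abs_fps (\<lambda>n. Wq q m r n k / complex_of_real (qfact q n))) n = fps_nth (fps_const (1 / (complex_of_real (qfact (q ^ m) k) * complex_of_real (qint q m) ^ k))
      * (\<Sum>j=0..k. fps_const ((-1) ^ (k - j) * complex_of_real (q ^ (m * ((k - j) choose 2)))
                                * complex_of_real (qbinom (q ^ m) k j))
            * fps_compose (qexp q) (fps_const (qbr q (of_nat (j * m) + r)) * fps_X))) n"
    by (simp only: Wq_AA[OF assms] fps_nth_Abs_fps)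
qed

end
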